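(* Let $N,n\ge1$ and let $C(\rho)$ be a matrix with $n$ columns whose entries are polynomials with rational coefficients in $\rho\in\mathbb{R}^N$. Fix a linear way of arranging the entries of a vector $m\in\mathbb{R}^n$ as the entries of a matrix $M=M(m)$. Suppose that for some generic $\rho_0\in\mathbb{R}^N$ there is $m_0$ with $C(\rho_0)m_0=0$ and $\operatorname{rank}M(m_0)=s$. Then for every generic $\rho\in\mathbb{R}^N$ there is $m$ with $C(\rho)m=0$ and $\operatorname{rank}M(m)\ge s$.
   Context: A point $\rho\in\mathbb{R}^N$ is generic if its coordinates satisfy no nonzero polynomial equation with rational coefficients. The arrangement $m\mapsto M(m)$ places each entry of $m$ in a fixed position of the matrix $M$ (the same for all $m$). *)

theory Defs
  imports "HOL-Analysis.Analysis"
begin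

inductive_set ratpoly :: "(real^'N \<Rightarrow> real) set" where
  const: "q \<in> \<rat> \<Longrightarrow> (\<lambda>_. q) \<in> ratpoly"
| var: "(\<lambda>x. x $ i) \<in> ratpoly"
| add: "p \<in> ratpoly \<Longrightarrow> q \<in> ratpoly \<Longrightarrow> (\<lambda>x. p x + q x) \<in> ratpoly"
| mult: "p \<in> ratpoly \<Longrightarrow> q \<in> ratpoly \<Longrightarrow> (\<lambda>x. p x * q x) \<in> ratpoly"

text \<open>A point is generic if it is not a root of any nonzero rational polynomial
(over the reals, a polynomial is nonzero iff its polynomial function is not identically zero).\<close>
definition generic :: "real^'N \<Rightarrow> bool" where
  "generic \<rho> \<longleftrightarrow> (\<forall>p\<in>ratpoly. p \<rho> = 0 \<longrightarrow> (\<forall>x. p x = 0))"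

definition polymat_eval :: "('k \<Rightarrow> 'n \<Rightarrow> (real^'N \<Rightarrow> real)) \<Rightarrow> real^'N \<Rightarrow> real^'n^'k" where
  "polymat_eval C \<rho> = (\<chi> i j. C i j \<rho>)"

definition arrange :: "('n::finite \<Rightarrow> 'r \<times> 'c) \<Rightarrow> real^'n \<Rightarrow> real^'c^'r" where
  "arrange pos m = (\<chi> r c. \<Sum>j\<in>{j. pos j = (r, c)}. m $ j)"

end

theory Submission
  imports Defs
begin


lemma ratpoly_neg: "p \<in> ratpoly \<Longrightarrow> (\<lambda>x. - p x) \<in> ratpoly"
proof -
  assume p: "p \<in> ratpoly"
  have "(\<lambda>x. (-1) * p x) \<in> ratpoly"
    by (rule ratpoly.mult[OF ratpoly.const p]) simp
  thus ?thesis by simp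
qed

lemma generic_zero: "p \<in> ratpoly \<Longrightarrow> generic x \<Longrightarrow> p x = 0 \<Longrightarrow> p y = 0"
  unfolding generic_def by blast

definition RF :: "(real^'N \<Rightarrow> real) set" where
  "RF = {f. \<exists>p\<in>ratpoly. \<exists>q\<in>ratpoly. \<forall>x. generic x \<longrightarrow> q x \<noteq> 0 \<and> f x = p x / q x}"

lemma RF_intro: "p \<in> ratpoly \<Longrightarrow> q \<in> ratpoly \<Longrightarrow> (\<forall>x. generic x \<longrightarrow> q x \<noteq> 0 \<and> f x = p x / q x) \<Longrightarrow> f \<in> RF"
  unfolding RF_def by blast

lemma RF_zero:
  assumes "f \<in> RF" "generic x" "generic y" "f x = 0" shows "f y = 0"
proof -
  obtain p q where pq: "p \<in> ratpoly" "q \<in> ratpoly" "\<And>x. generic x \<Longrightarrow> q x \<noteq> 0 \<and> f x = p x / q x"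
    using assms(1) unfolding RF_def by blast
  have "p x = 0" using pq(3)[OF assms(2)] assms(4) by auto
  hence "p y = 0" using generic_zero[OF pq(1) assms(2)] by blast
  thus ?thesis using pq(3)[OF assms(3)] by simp
qed

lemma RF_zero_iff:
  assumes "f \<in> RF" "generic x" "generic y" shows "f x = 0 \<longleftrightarrow> f y = 0"
  using RF_zero assms by metis

lemma ratpoly_RF: "p \<in> ratpoly \<Longrightarrow> p \<in> RF"
  unfolding RF_def
  by (rule CollectI, rule bexI[of _ p], rule bexI[of _ "\<lambda>_. 1"]) (auto intro: ratpoly.const)

lemma RF_const: "c \<in> \<rat> \<Longrightarrow> (\<lambda>_. c) \<in> RF"
  by (rule ratpoly_RF) (rule ratpoly.const)

lemma RF_add: assumes "f \<in> RF" "g \<in> RF" shows "(\<lambda>x. f x + g x) \<in> RF"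
proof -
  obtain p q where pq: "p \<in> ratpoly" "q \<in> ratpoly" "\<And>x. generic x \<Longrightarrow> q x \<noteq> 0 \<and> f x = p x / q x"
    using assms(1) unfolding RF_def by blast
  obtain p' q' where pq': "p' \<in> ratpoly" "q' \<in> ratpoly" "\<And>x. generic x \<Longrightarrow> q' x \<noteq> 0 \<and> g x = p' x / q' x"
    using assms(2) unfolding RF_def by blast
  have "(\<lambda>x. p x * q' x + p' x * q x) \<in> ratpoly"
    by (intro ratpoly.add ratpoly.mult pq pq')
  moreover have "(\<lambda>x. q x * q' x) \<in> ratpoly" by (intro ratpoly.mult pq pq')
  moreover have "\<forall>x. generic x \<longrightarrow> q x * q' x \<noteq> 0 \<and> f x + g x = (p x * q' x + p' x * q x) / (q x * q' x)"
    using pq(3) pq'(3) by (auto simp: field_simps)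
  ultimately show ?thesis by (rule RF_intro)
qed

lemma RF_mult: assumes "f \<in> RF" "g \<in> RF" shows "(\<lambda>x. f x * g x) \<in> RF"
proof -
  obtain p q where pq: "p \<in> ratpoly" "q \<in> ratpoly" "\<And>x. generic x \<Longrightarrow> q x \<noteq> 0 \<and> f x = p x / q x"
    using assms(1) unfolding RF_def by blast
  obtain p' q' where pq': "p' \<in> ratpoly" "q' \<in> ratpoly" "\<And>x. generic x \<Longrightarrow> q' x \<noteq> 0 \<and> g x = p' x / q' x"
    using assms(2) unfolding RF_def by blast
  have "(\<lambda>x. p x * p' x) \<in> ratpoly"
    by (intro ratpoly.add ratpoly.mult pq pq')
  moreover have "(\<lambda>x. q x * q' x) \<in> ratpoly" by (intro ratpoly.mult pq pq')
  moreover have "\<forall>x. generic x \<longrightarrow> q x * q' x \<noteq> 0 \<and> f x * g x = (p x * p' x) / (q x * q' x)"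
    using pq(3) pq'(3) by (auto simp: field_simps)
  ultimately show ?thesis by (rule RF_intro)
qed

lemma RF_neg: assumes "f \<in> RF" shows "(\<lambda>x. - f x) \<in> RF"
  using RF_mult[OF RF_const[of "-1"] assms] by simp

lemma RF_diff: assumes "f \<in> RF" "g \<in> RF" shows "(\<lambda>x. f x - g x) \<in> RF"
  using RF_add[OF assms(1) RF_neg[OF assms(2)]] by simp

lemma RF_divide: assumes "f \<in> RF" "g \<in> RF" shows "(\<lambda>x. f x / g x) \<in> RF"
proof -
  obtain p q where pq: "p \<in> ratpoly" "q \<in> ratpoly" "\<And>x. generic x \<Longrightarrow> q x \<noteq> 0 \<and> f x = p x / q x"
    using assms(1) unfolding RF_def by blast
  obtain p' q' where pq': "p' \<in> ratpoly" "q' \<in> ratpoly" "\<And>x. generic x \<Longrightarrow> q' x \<noteq> 0 \<and> g x = p' x / q' x"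
    using assms(2) unfolding RF_def by blast
  show ?thesis
  proof (cases "\<exists>x0. generic x0 \<and> p' x0 \<noteq> 0")
    case True
    then obtain x0 where x0: "generic x0" "p' x0 \<noteq> 0" by blast
    have nz: "p' x \<noteq> 0" if "generic x" for x
      using generic_zero[OF pq'(1) that, of x0] x0 by blast
    have "(\<lambda>x. p x * q' x) \<in> ratpoly" by (intro ratpoly.mult pq pq')
    moreover have "(\<lambda>x. q x * p' x) \<in> ratpoly" by (intro ratpoly.mult pq pq')
    moreover have "\<forall>x. generic x \<longrightarrow> q x * p' x \<noteq> 0 \<and> f x / g x = (p x * q' x) / (q x * p' x)"
      using pq(3) pq'(3) nz by (auto simp: field_simps)
    ultimately show ?thesis by (rule RF_intro)
  next
    case False
    have "(\<lambda>_. 0::real) \<in> ratpoly" by (rule ratpoly.const) simp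
    moreover have "(\<lambda>_. 1::real) \<in> ratpoly" by (rule ratpoly.const) simp
    moreover have "\<forall>x. generic x \<longrightarrow> (1::real) \<noteq> 0 \<and> f x / g x = 0 / 1"
      using pq'(3) False by auto
    ultimately show ?thesis by (rule RF_intro)
  qed
qed

lemma RF_sum: assumes "\<And>i. i \<in> S \<Longrightarrow> f i \<in> RF" shows "(\<lambda>x. \<Sum>i\<in>S. f i x) \<in> RF"
  using assms
proof (induction S rule: infinite_finite_induct)
  case (infinite A) then show ?case using RF_const[of 0] by simp
next
  case empty then show ?case using RF_const[of 0] by simp
next
  case (insert a A)
  then show ?case using RF_add[of "f a" "\<lambda>x. \<Sum>i\<in>A. f i x"] by simp
qed



lemma sum_abs_bound:
  fixes e d :: "'a \<Rightarrow> real"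
  assumes "\<And>i. i \<in> S \<Longrightarrow> \<bar>d i\<bar> \<le> \<delta>"
  shows "\<bar>\<Sum>i\<in>S. e i * d i\<bar> \<le> (\<Sum>i\<in>S. \<bar>e i\<bar>) * \<delta>"
proof -
  have "\<bar>\<Sum>i\<in>S. e i * d i\<bar> \<le> (\<Sum>i\<in>S. \<bar>e i * d i\<bar>)" by (rule sum_abs)
  also have "\<dots> \<le> (\<Sum>i\<in>S. \<bar>e i\<bar> * \<delta>)"
    by (rule sum_mono) (simp add: abs_mult assms mult_left_mono)
  also have "\<dots> = (\<Sum>i\<in>S. \<bar>e i\<bar>) * \<delta>" by (simp add: sum_distrib_right)
  finally show ?thesis .
qed

locale subfield_dense =
  fixes F :: "real set"
  assumes Q: "\<rat> \<subseteq> F"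
    and add: "\<And>a b. a \<in> F \<Longrightarrow> b \<in> F \<Longrightarrow> a + b \<in> F"
    and mul: "\<And>a b. a \<in> F \<Longrightarrow> b \<in> F \<Longrightarrow> a * b \<in> F"
    and sub: "\<And>a b. a \<in> F \<Longrightarrow> b \<in> F \<Longrightarrow> a - b \<in> F"
    and dv: "\<And>a b. a \<in> F \<Longrightarrow> b \<in> F \<Longrightarrow> a / b \<in> F"
begin

lemma zero: "0 \<in> F" using Q by auto

lemma sumF: "(\<And>i. i \<in> S \<Longrightarrow> f i \<in> F) \<Longrightarrow> sum f S \<in> F"
proof (induction S rule: infinite_finite_induct)
  case (infinite A) then show ?case using zero by simp
next
  case empty then show ?case using zero by simp
next
  case (insert a A) then show ?case using add by simp
qed

lemma density:
  fixes L :: "('a::finite \<Rightarrow> real) set"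
  assumes "finite L" "\<And>e i. e \<in> L \<Longrightarrow> e i \<in> F"
  shows "\<forall>x \<epsilon>. (\<forall>e\<in>L. (\<Sum>i\<in>UNIV. e i * x i) = 0) \<longrightarrow> \<epsilon> > 0 \<longrightarrow>
    (\<exists>z. (\<forall>e\<in>L. (\<Sum>i\<in>UNIV. e i * z i) = 0) \<and> (\<forall>i. z i \<in> F) \<and> (\<forall>i. \<bar>z i - x i\<bar> < \<epsilon>))"
  using assms
proof (induction L rule: finite_induct)
  case empty
  show ?case
  proof (intro allI impI)
    fix x :: "'a \<Rightarrow> real" and \<epsilon> :: real
    assume "\<epsilon> > 0"
    have "\<forall>i. \<exists>q. q \<in> F \<and> \<bar>q - x i\<bar> < \<epsilon>"
    proof
      fix i
      obtain q where "q \<in> \<rat>" "x i - \<epsilon> < q" "q < x i"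
        using Rats_dense_in_real[of "x i - \<epsilon>" "x i"] \<open>\<epsilon> > 0\<close> by auto
      thus "\<exists>q. q \<in> F \<and> \<bar>q - x i\<bar> < \<epsilon>" using Q by (intro exI[of _ q]) auto
    qed
    then obtain z where "\<forall>i. z i \<in> F \<and> \<bar>z i - x i\<bar> < \<epsilon>" by metis
    thus "\<exists>z. (\<forall>e\<in>{}. (\<Sum>i\<in>UNIV. e i * z i) = 0) \<and> (\<forall>i. z i \<in> F) \<and> (\<forall>i. \<bar>z i - x i\<bar> < \<epsilon>)"
      by auto
  qed
next
  case (insert e L)
  have eF: "\<And>i. e i \<in> F" using insert.prems by auto
  have IH: "\<And>x \<epsilon>. (\<forall>e\<in>L. (\<Sum>i\<in>UNIV. e i * x i) = 0) \<Longrightarrow> \<epsilon> > 0 \<Longrightarrow>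
    (\<exists>z. (\<forall>e\<in>L. (\<Sum>i\<in>UNIV. e i * z i) = 0) \<and> (\<forall>i. z i \<in> F) \<and> (\<forall>i. \<bar>z i - x i\<bar> < \<epsilon>))"
    using insert.IH insert.prems by blast
  define a where "a = (\<lambda>y::'a\<Rightarrow>real. \<Sum>i\<in>UNIV. e i * y i)"
  define E where "E = (\<Sum>i\<in>UNIV. \<bar>e i\<bar>)"
  have E0: "E \<ge> 0" unfolding E_def by (simp add: sum_nonneg)
  have adiff: "\<bar>a y - a x\<bar> \<le> E * \<delta>" if "\<And>i. \<bar>y i - x i\<bar> \<le> \<delta>" for y x \<delta>
  proof -
    have "a y - a x = (\<Sum>i\<in>UNIV. e i * (y i - x i))"
      unfolding a_def by (simp add: sum_subtractf[symmetric] algebra_simps)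
    thus ?thesis using sum_abs_bound[of UNIV "\<lambda>i. y i - x i" \<delta> e] that unfolding E_def
      by (simp add: mult.commute)
  qed
  show ?case
  proof (intro allI impI)
    fix x :: "'a \<Rightarrow> real" and \<epsilon> :: real
    assume Kx: "\<forall>e'\<in>insert e L. (\<Sum>i\<in>UNIV. e' i * x i) = 0" and \<epsilon>: "\<epsilon> > 0"
    have KLx: "\<forall>e\<in>L. (\<Sum>i\<in>UNIV. e i * x i) = 0" and ax: "a x = 0" using Kx unfolding a_def by auto
    show "\<exists>z. (\<forall>e\<in>insert e L. (\<Sum>i\<in>UNIV. e i * z i) = 0) \<and> (\<forall>i. z i \<in> F) \<and> (\<forall>i. \<bar>z i - x i\<bar> < \<epsilon>)"
    proof (cases "\<forall>y. (\<forall>e\<in>L. (\<Sum>i\<in>UNIV. e i * y i) = 0) \<longrightarrow> a y = 0")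
      case True
      obtain z where z: "\<forall>e\<in>L. (\<Sum>i\<in>UNIV. e i * z i) = 0" "\<forall>i. z i \<in> F" "\<forall>i. \<bar>z i - x i\<bar> < \<epsilon>"
        using IH[OF KLx \<epsilon>] by blast
      have "a z = 0" using True z(1) by blast
      thus ?thesis using z unfolding a_def by auto
    next
      case False
      then obtain y where Ky: "\<forall>e\<in>L. (\<Sum>i\<in>UNIV. e i * y i) = 0" and ay: "a y \<noteq> 0" by blast
      define \<epsilon>1 where "\<epsilon>1 = \<bar>a y\<bar> / (E + 1)"
      have \<epsilon>1: "\<epsilon>1 > 0" using ay E0 unfolding \<epsilon>1_def by auto
      obtain y' where y': "\<forall>e\<in>L. (\<Sum>i\<in>UNIV. e i * y' i) = 0" "\<forall>i. y' i \<in> F" "\<forall>i. \<bar>y' i - y i\<bar> < \<epsilon>1"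
        using IH[OF Ky \<epsilon>1] by blast
      have "\<bar>a y' - a y\<bar> \<le> E * \<epsilon>1" by (rule adiff) (use y'(3) in \<open>simp add: less_imp_le\<close>)
      also have "E * \<epsilon>1 < \<bar>a y\<bar>" unfolding \<epsilon>1_def using ay E0
        by (simp add: field_simps)
      finally have ay': "a y' \<noteq> 0" by auto
      define A where "A = \<bar>a y'\<bar>"
      define Y where "Y = (\<Sum>i\<in>UNIV. \<bar>y' i\<bar>)"
      have A: "A > 0" using ay' unfolding A_def by auto
      have Y0: "Y \<ge> 0" unfolding Y_def by (simp add: sum_nonneg)
      have yY: "\<bar>y' i\<bar> \<le> Y" for i unfolding Y_def
        by (rule member_le_sum) auto
      define \<delta> where "\<delta> = \<epsilon> / (2 * (1 + E * Y / A))"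
      have pos: "1 + E * Y / A > 0" using E0 Y0 A by (simp add: add_pos_nonneg)
      have \<delta>: "\<delta> > 0" unfolding \<delta>_def using \<epsilon> pos by simp
      obtain z where z: "\<forall>e\<in>L. (\<Sum>i\<in>UNIV. e i * z i) = 0" "\<forall>i. z i \<in> F" "\<forall>i. \<bar>z i - x i\<bar> < \<delta>"
        using IH[OF KLx \<delta>] by blast
      have az: "\<bar>a z\<bar> \<le> E * \<delta>" using adiff[of z x \<delta>] z(3) ax by (simp add: less_imp_le)
      define z' where "z' = (\<lambda>i. z i - (a z / a y') * y' i)"
      have "\<forall>e\<in>insert e L. (\<Sum>i\<in>UNIV. e i * z' i) = 0"
      proof
        fix e' assume e': "e' \<in> insert e L"
        have eq: "(\<Sum>i\<in>UNIV. e' i * z' i) = (\<Sum>i\<in>UNIV. e' i * z i) - (a z / a y') * (\<Sum>i\<in>UNIV. e' i * y' i)"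
          unfolding z'_def by (simp add: algebra_simps sum_subtractf sum_distrib_left)
        show "(\<Sum>i\<in>UNIV. e' i * z' i) = 0"
        proof (cases "e' = e")
          case True thus ?thesis using eq ay' unfolding a_def by simp
        next
          case False thus ?thesis using eq e' z(1) y'(1) by simp
        qed
      qed
      moreover have "\<forall>i. z' i \<in> F"
      proof
        fix i
        have "a z \<in> F" "a y' \<in> F" unfolding a_def using eF z(2) y'(2) by (auto intro!: sumF mul)
        thus "z' i \<in> F" unfolding z'_def using z(2) y'(2) by (intro sub mul dv) auto
      qed
      moreover have "\<forall>i. \<bar>z' i - x i\<bar> < \<epsilon>"
      proof
        fix i
        have "\<bar>z' i - x i\<bar> \<le> \<bar>z i - x i\<bar> + \<bar>a z / a y'\<bar> * \<bar>y' i\<bar>"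
        proof -
          have "z' i - x i = (z i - x i) - (a z / a y') * y' i" unfolding z'_def by simp
          hence "\<bar>z' i - x i\<bar> \<le> \<bar>z i - x i\<bar> + \<bar>(a z / a y') * y' i\<bar>"
            by (simp only: abs_triangle_ineq4)
          thus ?thesis by (simp only: abs_mult)
        qed
        also have "\<dots> \<le> \<delta> + (E * \<delta> / A) * Y"
        proof (rule add_mono)
          show "\<bar>z i - x i\<bar> \<le> \<delta>" using z(3) by (simp add: less_imp_le)
          have "\<bar>a z / a y'\<bar> \<le> E * \<delta> / A" unfolding A_def using az ay'
            by (simp add: abs_divide divide_right_mono)
          thus "\<bar>a z / a y'\<bar> * \<bar>y' i\<bar> \<le> E * \<delta> / A * Y"
            using yY[of i] by (intro mult_mono) (auto simp: A E0 \<delta> less_imp_le)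
        qed
        also have "\<dots> = \<delta> * (1 + E * Y / A)" by (simp add: algebra_simps)
        also have "\<dots> = \<epsilon> / 2" unfolding \<delta>_def using pos
          by (metis (no_types, lifting) divide_divide_eq_left' nonzero_mult_div_cancel_right order_less_irrefl times_divide_eq_left)
        finally show "\<bar>z' i - x i\<bar> < \<epsilon>" using \<epsilon> by simp
      qed
      ultimately show ?thesis by blast
    qed
  qed
qed

end



definition indep_fam :: "('r \<Rightarrow> 'v::real_vector) \<Rightarrow> 'r set \<Rightarrow> bool" where
  "indep_fam u R \<longleftrightarrow> (\<forall>c. (\<Sum>i\<in>R. c i *\<^sub>R u i) = 0 \<longrightarrow> (\<forall>i\<in>R. c i = 0))"

lemma indep_inj:
  assumes "finite R" "indep_fam u R" shows "inj_on u R"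
proof (rule inj_onI, rule ccontr)
  fix i j assume ij: "i \<in> R" "j \<in> R" "u i = u j" "i \<noteq> j"
  define c where "c = (\<lambda>t. if t = i then 1 else if t = j then -1 else (0::real))"
  have "\<And>t. c t *\<^sub>R u t = (if t = i then u i else 0) + (if t = j then - u j else 0)"
    unfolding c_def using ij(4) by auto
  hence "(\<Sum>t\<in>R. c t *\<^sub>R u t) = (\<Sum>t\<in>R. (if t = i then u i else 0)) + (\<Sum>t\<in>R. (if t = j then - u j else 0))"
    by (simp add: sum.distrib)
  also have "\<dots> = 0" using ij assms(1) by simp
  finally have "c i = 0" using assms(2) ij(1) unfolding indep_fam_def by blast
  thus False unfolding c_def by simp
qed

lemma indep_rank:
  fixes A :: "real^'c::finite^'r::finite"
  assumes "indep_fam (\<lambda>i. row i A) R"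
  shows "card R \<le> rank A"
proof -
  let ?u = "\<lambda>i. row i A"
  have inj: "inj_on ?u R" by (rule indep_inj[OF _ assms]) simp
  have ind: "independent (?u ` R)"
    unfolding independent_explicit
  proof (intro conjI allI impI ballI)
    show "finite (?u ` R)" by simp
    fix c v assume s: "(\<Sum>v\<in>?u ` R. c v *\<^sub>R v) = 0" and v: "v \<in> ?u ` R"
    have "(\<Sum>i\<in>R. c (?u i) *\<^sub>R ?u i) = 0" using s by (simp add: sum.reindex[OF inj])
    hence "\<forall>i\<in>R. c (?u i) = 0" using assms[unfolded indep_fam_def, rule_format, of "\<lambda>i. c (?u i)"] by simp
    thus "c v = 0" using v by blast
  qed
  have sub: "?u ` R \<subseteq> rows A" unfolding rows_def by auto
  have "card R = card (?u ` R)" using card_image[OF inj] by simp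
  also have "\<dots> \<le> dim (rows A)" by (rule independent_card_le_dim[OF sub ind])
  finally show ?thesis by (simp add: row_rank_def)
qed

lemma rank_indep:
  fixes A :: "real^'c::finite^'r::finite"
  shows "\<exists>R. card R = rank A \<and> indep_fam (\<lambda>i. row i A) R"
proof -
  obtain B where B: "B \<subseteq> rows A" "independent B" "card B = dim (rows A)"
    using basis_exists[of "rows A"] by metis
  have "\<forall>b\<in>B. \<exists>i. row i A = b" using B(1) unfolding rows_def by auto
  then obtain g where g: "\<forall>b\<in>B. row (g b) A = b" by metis
  have injg: "inj_on g B" by (metis g inj_onI)
  have finB: "finite B" using B(2) independent_explicit by blast
  have "card (g ` B) = rank A" using card_image[OF injg] B(3) by (simp add: row_rank_def)
  moreover have "indep_fam (\<lambda>i. row i A) (g ` B)"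
    unfolding indep_fam_def
  proof (intro allI impI ballI)
    fix c i assume s: "(\<Sum>i\<in>g ` B. c i *\<^sub>R row i A) = 0" and i: "i \<in> g ` B"
    have "(\<Sum>b\<in>B. c (g b) *\<^sub>R b) = 0" using s g by (simp add: sum.reindex[OF injg])
    moreover have indB: "\<forall>c. (\<Sum>v\<in>B. c v *\<^sub>R v) = 0 \<longrightarrow> (\<forall>v\<in>B. c v = 0)" using B(2) unfolding independent_explicit by blast
    ultimately have "\<forall>b\<in>B. c (g b) = 0" using indB[rule_format, of "\<lambda>b. c (g b)"] by simp
    thus "c i = 0" using i by blast
  qed
  ultimately show ?thesis by blast
qed

lemma dual_vec:
  fixes u :: "'r::finite \<Rightarrow> real^'c::finite"
  assumes "indep_fam u R" "j \<in> R"
  shows "\<exists>w. \<forall>i\<in>R. u i \<bullet> w = (if i = j then 1 else 0)"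
proof -
  let ?S = "u ` (R - {j})"
  obtain y z where yz: "y \<in> span ?S" "\<And>w. w \<in> span ?S \<Longrightarrow> orthogonal z w" "u j = y + z"
    using orthogonal_subspace_decomp_exists[of ?S "u j"] by metis
  have inj: "inj_on u R" by (rule indep_inj[OF _ assms(1)]) simp
  have injS: "inj_on u (R - {j})" using inj by (rule inj_on_subset) auto
  have z0: "z \<noteq> 0"
  proof
    assume "z = 0"
    hence "u j \<in> span ?S" using yz by simp
    then obtain d where d: "u j = (\<Sum>v\<in>?S. d v *\<^sub>R v)" using span_finite[of ?S] by auto
    hence d': "u j = (\<Sum>i\<in>R-{j}. d (u i) *\<^sub>R u i)" by (simp add: sum.reindex[OF injS])
    define c where "c = (\<lambda>i. if i = j then -1 else d (u i))"
    have "(\<Sum>i\<in>R. c i *\<^sub>R u i) = c j *\<^sub>R u j + (\<Sum>i\<in>R-{j}. c i *\<^sub>R u i)"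
      using assms(2) by (simp add: sum.remove)
    also have "(\<Sum>i\<in>R-{j}. c i *\<^sub>R u i) = (\<Sum>i\<in>R-{j}. d (u i) *\<^sub>R u i)"
      unfolding c_def by (rule sum.cong) auto
    finally have "(\<Sum>i\<in>R. c i *\<^sub>R u i) = 0" using d' unfolding c_def by simp
    hence "c j = 0" using assms unfolding indep_fam_def by blast
    thus False unfolding c_def by simp
  qed
  define w where "w = z /\<^sub>R (z \<bullet> z)"
  have zz: "z \<bullet> z \<noteq> 0" using z0 by simp
  have "u i \<bullet> w = (if i = j then 1 else 0)" if i: "i \<in> R" for i
  proof (cases "i = j")
    case True
    have "y \<bullet> z = 0" using yz(2)[OF yz(1)] by (simp add: orthogonal_def inner_commute)
    hence "u j \<bullet> z = z \<bullet> z" using yz(3) by (simp add: inner_add_left)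
    thus ?thesis using True zz unfolding w_def by simp
  next
    case False
    have "u i \<in> span ?S" using i False by (intro span_base) auto
    hence "orthogonal z (u i)" by (rule yz(2))
    hence "u i \<bullet> z = 0" unfolding orthogonal_def by (metis inner_commute)
    thus ?thesis using False unfolding w_def by simp
  qed
  thus ?thesis by blast
qed

lemma indep_open:
  fixes u :: "'r::finite \<Rightarrow> real^'c::finite"
  assumes "indep_fam u R"
  shows "\<exists>\<delta>>0. \<forall>u'. (\<forall>i\<in>R. \<forall>k. \<bar>u' i $ k - u i $ k\<bar> < \<delta>) \<longrightarrow> indep_fam u' R"
proof -
  have "\<forall>j\<in>R. \<exists>w. \<forall>i\<in>R. u i \<bullet> w = (if i = j then 1 else 0)"
    using dual_vec[OF assms] by blast
  then obtain w where w: "\<And>j i. j \<in> R \<Longrightarrow> i \<in> R \<Longrightarrow> u i \<bullet> w j = (if i = j then 1 else 0)" by metis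
  define W where "W = (\<Sum>j\<in>R. norm (w j)) + 1"
  have W: "W > 0" unfolding W_def by (simp add: add_nonneg_pos sum_nonneg)
  have wW: "norm (w j) \<le> W" if "j \<in> R" for j
  proof -
    have "norm (w j) \<le> (\<Sum>j\<in>R. norm (w j))" by (rule member_le_sum) (use that in auto)
    thus ?thesis unfolding W_def by simp
  qed
  define D where "D = real CARD('c)"
  define n where "n = real (card R)"
  have D0: "D \<ge> 0" and n0: "n \<ge> 0" unfolding D_def n_def by auto
  define \<delta> where "\<delta> = 1 / (2 * (n * D * W + 1))"
  have pos: "n * D * W + 1 > 0" using D0 n0 W by (simp add: add_nonneg_pos)
  have \<delta>: "\<delta> > 0" unfolding \<delta>_def using pos by simp
  have key: "n * D * \<delta> * W \<le> 1/2"
  proof -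
    have "n * D * \<delta> * W = (n * D * W) / (2 * (n * D * W + 1))" unfolding \<delta>_def by simp
    also have "\<dots> \<le> 1/2" using pos by (simp add: field_simps)
    finally show ?thesis .
  qed
  show ?thesis
  proof (intro exI[of _ \<delta>] conjI allI impI \<delta>)
    fix u' assume close: "\<forall>i\<in>R. \<forall>k. \<bar>u' i $ k - u i $ k\<bar> < \<delta>"
    have nd: "norm (u i - u' i) \<le> D * \<delta>" if "i \<in> R" for i
    proof -
      have "norm (u i - u' i) \<le> (\<Sum>k\<in>UNIV. \<bar>(u i - u' i) $ k\<bar>)" by (rule norm_le_l1_cart)
      also have "\<dots> \<le> (\<Sum>k\<in>(UNIV::'c set). \<delta>)"
        using close that by (intro sum_mono) (simp add: abs_minus_commute less_imp_le)
      finally show ?thesis unfolding D_def by simp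
    qed
    show "indep_fam u' R" unfolding indep_fam_def
    proof (intro allI impI)
      fix c assume s: "(\<Sum>i\<in>R. c i *\<^sub>R u' i) = 0"
      define S where "S = (\<Sum>i\<in>R. \<bar>c i\<bar>)"
      have S0: "S \<ge> 0" unfolding S_def by (simp add: sum_nonneg)
      have ck: "\<bar>c k\<bar> \<le> S * (D * \<delta> * W)" if k: "k \<in> R" for k
      proof -
        have "(\<Sum>i\<in>R. c i * (u i \<bullet> w k)) = (\<Sum>i\<in>R. (if i = k then c i else 0))"
          by (rule sum.cong) (simp_all add: w k)
        hence "c k = (\<Sum>i\<in>R. c i * (u i \<bullet> w k))" using k by simp
        moreover have "(\<Sum>i\<in>R. c i * (u' i \<bullet> w k)) = 0"
        proof -
          have "(\<Sum>i\<in>R. c i * (u' i \<bullet> w k)) = (\<Sum>i\<in>R. c i *\<^sub>R u' i) \<bullet> w k"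
            by (simp add: inner_sum_left)
          thus ?thesis using s by simp
        qed
        ultimately have "c k = (\<Sum>i\<in>R. c i * ((u i - u' i) \<bullet> w k))"
          by (simp add: inner_diff_left algebra_simps sum_subtractf)
        moreover have "\<bar>(u i - u' i) \<bullet> w k\<bar> \<le> D * \<delta> * W" if "i \<in> R" for i
        proof -
          have "\<bar>(u i - u' i) \<bullet> w k\<bar> \<le> norm (u i - u' i) * norm (w k)" by (rule Cauchy_Schwarz_ineq2)
          also have "\<dots> \<le> (D * \<delta>) * W"
            by (intro mult_mono nd wW that k) (use D0 \<delta> in auto)
          finally show ?thesis by simp
        qed
        ultimately show ?thesis using sum_abs_bound[of R "\<lambda>i. (u i - u' i) \<bullet> w k" "D * \<delta> * W" c]
          unfolding S_def by simp
      qed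
      have "S \<le> (\<Sum>k\<in>R. S * (D * \<delta> * W))" unfolding S_def[symmetric]
        using ck by (subst (1) S_def) (rule sum_mono)
      also have "\<dots> = S * (n * D * \<delta> * W)" unfolding n_def by (simp add: algebra_simps)
      also have "\<dots> \<le> S * (1/2)" using key S0 by (intro mult_left_mono) auto
      finally have "S = 0" using S0 by simp
      hence "\<forall>i\<in>R. \<bar>c i\<bar> = 0" unfolding S_def by (subst (asm) sum_nonneg_eq_0_iff) auto
      thus "\<forall>i\<in>R. c i = 0" by simp
    qed
  qed
qed



definition Fat :: "real^'N \<Rightarrow> real set" where "Fat x = (\<lambda>f. f x) ` RF"

lemma Fat_subfield: "subfield_dense (Fat x)"
proof
  show "\<rat> \<subseteq> Fat x"
  proof
    fix q :: real assume "q \<in> \<rat>"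
    hence "(\<lambda>_. q) \<in> RF" by (rule RF_const)
    thus "q \<in> Fat x" unfolding Fat_def by (rule rev_image_eqI) simp
  qed
next
  fix a b assume "a \<in> Fat x" "b \<in> Fat x"
  then obtain f g where fg: "f \<in> RF" "g \<in> RF" "a = f x" "b = g x" unfolding Fat_def by auto
  show "a + b \<in> Fat x" unfolding Fat_def using fg RF_add[OF fg(1,2)] by (intro rev_image_eqI) auto
  show "a * b \<in> Fat x" unfolding Fat_def using fg RF_mult[OF fg(1,2)] by (intro rev_image_eqI) auto
  show "a - b \<in> Fat x" unfolding Fat_def using fg RF_diff[OF fg(1,2)] by (intro rev_image_eqI) auto
  show "a / b \<in> Fat x" unfolding Fat_def using fg RF_divide[OF fg(1,2)] by (intro rev_image_eqI) auto
qed

lemma sum_restrict_UNIV: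
  fixes f :: "'a::finite \<Rightarrow> real"
  assumes "\<And>i. i \<notin> R \<Longrightarrow> f i = 0"
  shows "(\<Sum>i\<in>UNIV. f i) = (\<Sum>i\<in>R. f i)"
  by (rule sum.mono_neutral_right) (use assms in auto)

lemma transfer_indep:
  fixes h :: "'r::finite \<Rightarrow> 'c::finite \<Rightarrow> real^'N::finite \<Rightarrow> real"
  assumes hRF: "\<And>i k. h i k \<in> RF" and gx: "generic x" and gy: "generic y"
    and ind: "indep_fam (\<lambda>i. \<chi> k. h i k x) R"
  shows "indep_fam (\<lambda>i. \<chi> k. h i k y) R"
proof (rule ccontr)
  assume "\<not> ?thesis"
  then obtain c i0 where c: "(\<Sum>i\<in>R. c i *\<^sub>R (\<chi> k. h i k y)) = 0" "i0 \<in> R" "c i0 \<noteq> 0"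
    unfolding indep_fam_def by blast
  define c' where "c' = (\<lambda>i. if i \<in> R then c i else 0)"
  define L :: "('r \<Rightarrow> real) set" where
    "L = range (\<lambda>k i. h i k y) \<union> (\<lambda>j i. if i = j then 1 else 0) ` (-R)"
  interpret F: subfield_dense "Fat y" by (rule Fat_subfield)
  have finL: "finite L" unfolding L_def by simp
  have LF: "e i \<in> Fat y" if "e \<in> L" for e i
  proof -
    have "h i k y \<in> Fat y" for k unfolding Fat_def using hRF by auto
    moreover have "(1::real) \<in> Fat y" "(0::real) \<in> Fat y" using F.Q by auto
    ultimately show ?thesis using that unfolding L_def by auto
  qed
  have comp: "(\<Sum>i\<in>R. c i * h i k y) = 0" for k
    using arg_cong[OF c(1), of "\<lambda>v. v $ k"] by (simp add: sum_component)
  have Kc: "\<forall>e\<in>L. (\<Sum>i\<in>UNIV. e i * c' i) = 0"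
  proof
    fix e assume "e \<in> L"
    then consider (a) k where "e = (\<lambda>i. h i k y)" | (b) j where "j \<notin> R" "e = (\<lambda>i. if i = j then 1 else 0)"
      unfolding L_def by auto
    thus "(\<Sum>i\<in>UNIV. e i * c' i) = 0"
    proof cases
      case a
      have "(\<Sum>i\<in>UNIV. e i * c' i) = (\<Sum>i\<in>R. e i * c' i)"
        by (rule sum_restrict_UNIV) (simp add: c'_def)
      also have "\<dots> = (\<Sum>i\<in>R. c i * h i k y)" unfolding a c'_def by (rule sum.cong) auto
      finally show ?thesis using comp by simp
    next
      case b
      have "(\<Sum>i\<in>UNIV. e i * c' i) = (\<Sum>i\<in>UNIV. if i = j then c' j else 0)"
        by (rule sum.cong) (auto simp: b)
      thus ?thesis using b by (simp add: c'_def)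
    qed
  qed
  have eps: "\<bar>c i0\<bar> > 0" using c(3) by simp
  have dens: "\<forall>x \<epsilon>. (\<forall>e\<in>L. (\<Sum>i\<in>UNIV. e i * x i) = 0) \<longrightarrow> \<epsilon> > 0 \<longrightarrow>
    (\<exists>z. (\<forall>e\<in>L. (\<Sum>i\<in>UNIV. e i * z i) = 0) \<and> (\<forall>i. z i \<in> Fat y) \<and> (\<forall>i. \<bar>z i - x i\<bar> < \<epsilon>))"
    by (rule F.density[of L]) (use finL LF in auto)
  obtain z where z: "\<forall>e\<in>L. (\<Sum>i\<in>UNIV. e i * z i) = 0" "\<forall>i. z i \<in> Fat y" "\<forall>i. \<bar>z i - c' i\<bar> < \<bar>c i0\<bar>"
    using dens Kc eps by blast
  have zi0: "z i0 \<noteq> 0"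
  proof
    assume "z i0 = 0"
    with z(3)[rule_format, of i0] c(2) show False by (simp add: c'_def)
  qed
  have zout: "z j = 0" if "j \<notin> R" for j
  proof -
    have "(\<lambda>i. if i = j then 1 else 0) \<in> L" unfolding L_def using that by auto
    hence "(\<Sum>i\<in>UNIV. (if i = j then 1 else 0) * z i) = 0" by (rule bspec[OF z(1)])
    moreover have "(\<Sum>i\<in>UNIV. (if i = j then 1 else 0) * z i) = (\<Sum>i\<in>UNIV. if i = j then z j else 0)"
      by (rule sum.cong) auto
    ultimately show ?thesis by simp
  qed
  have "\<forall>i. \<exists>g. g \<in> RF \<and> z i = g y" using z(2) unfolding Fat_def by auto
  then obtain g where g: "\<And>i. g i \<in> RF" "\<And>i. z i = g i y" by metis
  have sumx: "(\<Sum>i\<in>R. g i x *\<^sub>R (\<chi> k. h i k x)) = 0"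
  proof (subst vec_eq_iff, intro allI)
    fix k
    define G where "G = (\<lambda>t. \<Sum>i\<in>R. g i t * h i k t)"
    have GRF: "G \<in> RF" unfolding G_def by (intro RF_sum RF_mult g hRF)
    have "(\<lambda>i. h i k y) \<in> L" unfolding L_def by auto
    hence "(\<Sum>i\<in>UNIV. h i k y * z i) = 0" by (rule bspec[OF z(1)])
    moreover have "(\<Sum>i\<in>UNIV. h i k y * z i) = (\<Sum>i\<in>R. h i k y * z i)"
      by (rule sum_restrict_UNIV) (simp add: zout)
    ultimately have "G y = 0" unfolding G_def using g(2) by (simp add: mult.commute)
    hence "G x = 0" using RF_zero[OF GRF gy gx] by blast
    thus "(\<Sum>i\<in>R. g i x *\<^sub>R (\<chi> k. h i k x)) $ k = 0 $ k"
      unfolding G_def by (simp add: sum_component)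
  qed
  have "g i0 x = 0" using ind[unfolded indep_fam_def, rule_format, of "\<lambda>i. g i x", OF sumx] c(2) by simp
  hence "g i0 y = 0" using RF_zero[OF g(1) gx gy] by blast
  thus False using zi0 g(2) by simp
qed



lemma polymat_comp: "(polymat_eval C \<rho> *v m) $ i = (\<Sum>j\<in>UNIV. C i j \<rho> * m $ j)"
  by (simp add: polymat_eval_def matrix_vector_mult_def)

lemma arrange_comp: "arrange pos m $ r $ c = (\<Sum>j\<in>{j. pos j = (r, c)}. m $ j)"
  by (simp add: arrange_def)

lemma arrange_close:
  assumes "inj pos" "\<And>j. \<bar>m $ j - m' $ j\<bar> < \<delta>" "\<delta> > 0"
  shows "\<bar>arrange pos m $ r $ c - arrange pos m' $ r $ c\<bar> < \<delta>"
proof (cases "\<exists>j0. pos j0 = (r, c)")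
  case True
  then obtain j0 where j0: "pos j0 = (r, c)" by blast
  have "{j. pos j = (r, c)} = {j0}" using j0 assms(1) by (auto simp: inj_def)
  thus ?thesis using assms(2) by (simp add: arrange_comp)
next
  case False
  hence "{j. pos j = (r, c)} = {}" by auto
  thus ?thesis using assms(3) by (simp add: arrange_comp)
qed

theorem propositionA1:
  fixes C :: "'k::finite \<Rightarrow> 'n::finite \<Rightarrow> (real^'N::finite \<Rightarrow> real)"
    and pos :: "'n \<Rightarrow> 'r::finite \<times> 'c::finite"
    and \<rho>0 :: "real^'N" and m0 :: "real^'n" and s :: nat
  assumes polys: "\<And>i j. C i j \<in> ratpoly"
    and pos_inj: "inj pos"
    and gen0: "generic \<rho>0"
    and ker0: "polymat_eval C \<rho>0 *v m0 = 0"
    and rank0: "rank (arrange pos m0) = s"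
  shows "\<forall>\<rho>. generic \<rho> \<longrightarrow>
           (\<exists>m. polymat_eval C \<rho> *v m = 0 \<and> rank (arrange pos m) \<ge> s)"
proof (intro allI impI)
  fix \<rho> :: "real^'N" assume gen: "generic \<rho>"
  obtain R where R: "card R = s" "indep_fam (\<lambda>i. row i (arrange pos m0)) R"
    using rank_indep[of "arrange pos m0"] rank0 by metis
  obtain \<delta> where \<delta>: "\<delta> > 0"
    "\<And>u'. (\<forall>i\<in>R. \<forall>k. \<bar>u' i $ k - row i (arrange pos m0) $ k\<bar> < \<delta>) \<Longrightarrow> indep_fam u' R"
    using indep_open[OF R(2)] by metis
  interpret F: subfield_dense "Fat \<rho>0" by (rule Fat_subfield)
  define L :: "('n \<Rightarrow> real) set" where "L = range (\<lambda>i j. C i j \<rho>0)"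
  have finL: "finite L" unfolding L_def by simp
  have LF: "e j \<in> Fat \<rho>0" if "e \<in> L" for e j
    using that polys ratpoly_RF unfolding L_def Fat_def by auto
  have dens: "\<forall>x \<epsilon>. (\<forall>e\<in>L. (\<Sum>i\<in>UNIV. e i * x i) = 0) \<longrightarrow> \<epsilon> > 0 \<longrightarrow>
    (\<exists>z. (\<forall>e\<in>L. (\<Sum>i\<in>UNIV. e i * z i) = 0) \<and> (\<forall>i. z i \<in> Fat \<rho>0) \<and> (\<forall>i. \<bar>z i - x i\<bar> < \<epsilon>))"
    by (rule F.density[of L]) (use finL LF in auto)
  have K0: "\<forall>e\<in>L. (\<Sum>j\<in>UNIV. e j * m0 $ j) = 0"
  proof
    fix e assume "e \<in> L"
    then obtain i where i: "e = (\<lambda>j. C i j \<rho>0)" unfolding L_def by auto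
    have "(polymat_eval C \<rho>0 *v m0) $ i = 0" using ker0 by simp
    thus "(\<Sum>j\<in>UNIV. e j * m0 $ j) = 0" unfolding i polymat_comp .
  qed
  obtain z where z: "\<forall>e\<in>L. (\<Sum>i\<in>UNIV. e i * z i) = 0" "\<forall>i. z i \<in> Fat \<rho>0" "\<forall>i. \<bar>z i - m0 $ i\<bar> < \<delta>"
    using dens K0 \<delta>(1) by blast
  define m1 where "m1 = (\<chi> j. z j)"
  have ind1: "indep_fam (\<lambda>i. row i (arrange pos m1)) R"
  proof (rule \<delta>(2), intro ballI allI)
    fix i k
    show "\<bar>row i (arrange pos m1) $ k - row i (arrange pos m0) $ k\<bar> < \<delta>"
      unfolding row_def using arrange_close[OF pos_inj _ \<delta>(1), of m1 m0] z(3)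
      by (simp add: m1_def)
  qed
  have "\<forall>j. \<exists>f. f \<in> RF \<and> z j = f \<rho>0" using z(2) unfolding Fat_def by auto
  then obtain fm where fm: "\<And>j. fm j \<in> RF" "\<And>j. z j = fm j \<rho>0" by metis
  define m where "m = (\<chi> j. fm j \<rho>)"
  have ker: "polymat_eval C \<rho> *v m = 0"
  proof (subst vec_eq_iff, intro allI)
    fix i
    define G where "G = (\<lambda>t. \<Sum>j\<in>UNIV. C i j t * fm j t)"
    have GRF: "G \<in> RF" unfolding G_def by (intro RF_sum RF_mult fm ratpoly_RF polys)
    have "(\<lambda>j. C i j \<rho>0) \<in> L" unfolding L_def by auto
    hence "(\<Sum>j\<in>UNIV. C i j \<rho>0 * z j) = 0" by (rule bspec[OF z(1)])
    hence "G \<rho>0 = 0" unfolding G_def using fm(2) by simp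
    hence "G \<rho> = 0" using RF_zero[OF GRF gen0 gen] by blast
    thus "(polymat_eval C \<rho> *v m) $ i = 0 $ i" unfolding polymat_comp G_def m_def by simp
  qed
  define h where "h = (\<lambda>i k t. \<Sum>j\<in>{j. pos j = (i, k)}. fm j t)"
  have hRF: "h i k \<in> RF" for i k unfolding h_def by (intro RF_sum fm)
  have h0: "(\<lambda>i. \<chi> k. h i k \<rho>0) = (\<lambda>i. row i (arrange pos m1))"
    by (rule ext, subst vec_eq_iff) (simp add: h_def row_def arrange_comp m1_def fm(2))
  have h1: "(\<lambda>i. \<chi> k. h i k \<rho>) = (\<lambda>i. row i (arrange pos m))"
    by (rule ext, subst vec_eq_iff) (simp add: h_def row_def arrange_comp m_def)
  have "indep_fam (\<lambda>i. \<chi> k. h i k \<rho>) R"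
    by (rule transfer_indep[OF hRF gen0 gen]) (simp add: h0 ind1)
  hence "indep_fam (\<lambda>i. row i (arrange pos m)) R" using h1 by simp
  hence "card R \<le> rank (arrange pos m)" by (rule indep_rank)
  thus "\<exists>m. polymat_eval C \<rho> *v m = 0 \<and> rank (arrange pos m) \<ge> s" using ker R(1) by blast
qed

end
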